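(* Let $\rho$ be a state of $A$, $\sigma$ a state of $B$, $\eta$ a state of $R$, $d=d_R$, and $\Lambda_p(\eta):=p\eta+(1-p)\mathbb{1}/d$. For every $p\in(0,1]$: $\Delta H_\eta\ge0$ if and only if $\Delta H_{\Lambda_p(\eta)}\ge0$.
   Context: $G$ is a compact group with normalized Haar measure $dg$; finite-dimensional systems $A,B$ carry continuous unitary representations $U_A,U_B$; the reference $R$ has $d_R=d_B$ and carries $U_R(g)=\overline{U_B(g)}$. The $G$-twirl on $RX$ ($X=A,B$) is $\mathcal{G}(M)=\int dg\,(U_R(g)\otimes U_X(g))M(U_R(g)\otimes U_X(g))^\dagger$. $H_{\min}(R|X)_\Omega=-\log_2\inf_{Y\ge0}\{\mathrm{tr}[Y]:\mathbb{1}_R\otimes Y\ge\Omega_{RX}\}$; $H_\eta(\tau):=H_{\min}(R|X)_{\mathcal{G}(\eta\otimes\tau)}$; $\Delta H_\eta:=H_\eta(\sigma)-H_\eta(\rho)$. *)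

theory Defs
  imports "HOL-Probability.Probability" "Jordan_Normal_Form.Schur_Decomposition"
begin

(* Complex numbers carry the partial order of HOL-Library.Complex_Order
   (imported via Jordan_Normal_Form): z \<le> w iff Re z \<le> Re w and Im z = Im w. *)

definition mtrace :: "complex mat \<Rightarrow> complex" where
  "mtrace A = (\<Sum>i<dim_row A. A $$ (i, i))"

text \<open>Kronecker (tensor) product; the first factor is the outer index.\<close>
definition kron :: "complex mat \<Rightarrow> complex mat \<Rightarrow> complex mat" where
  "kron A B = mat (dim_row A * dim_row B) (dim_col A * dim_col B)
     (\<lambda>(i, j). A $$ (i div dim_row B, j div dim_col B) * B $$ (i mod dim_row B, j mod dim_col B))"

definition conj_mat :: "complex mat \<Rightarrow> complex mat" where
  "conj_mat A = map_mat cnj A"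

definition psd_mat :: "nat \<Rightarrow> complex mat \<Rightarrow> bool" where
  "psd_mat n M \<longleftrightarrow> M \<in> carrier_mat n n \<and>
     (\<forall>v \<in> carrier_vec n. 0 \<le> conjugate v \<bullet> (M *\<^sub>v v))"

definition loewner_le :: "nat \<Rightarrow> complex mat \<Rightarrow> complex mat \<Rightarrow> bool" where
  "loewner_le n A B \<longleftrightarrow> A \<in> carrier_mat n n \<and> B \<in> carrier_mat n n \<and> psd_mat n (B - A)"

definition is_state :: "nat \<Rightarrow> complex mat \<Rightarrow> bool" where
  "is_state n \<rho> \<longleftrightarrow> psd_mat n \<rho> \<and> mtrace \<rho> = 1"

definition unitary_mat :: "nat \<Rightarrow> complex mat \<Rightarrow> bool" where
  "unitary_mat n U \<longleftrightarrow> U \<in> carrier_mat n n \<and> U * mat_adjoint U = 1\<^sub>m n \<and> mat_adjoint U * U = 1\<^sub>m n"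

text \<open>Continuous unitary representation of the (additively written, not necessarily
  commutative) topological group 'g on C^d.\<close>
definition cont_unitary_rep :: "nat \<Rightarrow> ('g::topological_group_add \<Rightarrow> complex mat) \<Rightarrow> bool" where
  "cont_unitary_rep d U \<longleftrightarrow> (\<forall>g. unitary_mat d (U g)) \<and> (\<forall>g h. U (g + h) = U g * U h)
     \<and> (\<forall>i<d. \<forall>j<d. continuous_on UNIV (\<lambda>g. U g $$ (i, j)))"

definition haar_prob :: "'g::topological_group_add measure \<Rightarrow> bool" where
  "haar_prob \<mu> \<longleftrightarrow> sets \<mu> = sets borel \<and> prob_space \<mu> \<and>
     (\<forall>g. \<forall>S \<in> sets borel. measure \<mu> ((+) g ` S) = measure \<mu> S)"

definition twirl :: "'g measure \<Rightarrow> ('g \<Rightarrow> complex mat) \<Rightarrow> ('g \<Rightarrow> complex mat)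
    \<Rightarrow> nat \<Rightarrow> nat \<Rightarrow> complex mat \<Rightarrow> complex mat" where
  "twirl \<mu> UR UX dR dX M = mat (dR * dX) (dR * dX) (\<lambda>(i, j).
     integral\<^sup>L \<mu> (\<lambda>g. (kron (UR g) (UX g) * M * mat_adjoint (kron (UR g) (UX g))) $$ (i, j)))"

definition Hmin :: "nat \<Rightarrow> nat \<Rightarrow> complex mat \<Rightarrow> real" where
  "Hmin dR dX \<Omega> = - log 2 (Inf {Re (mtrace Y) | Y. psd_mat dX Y \<and>
       loewner_le (dR * dX) \<Omega> (kron (1\<^sub>m dR) Y)})"

definition H_eta :: "'g measure \<Rightarrow> ('g \<Rightarrow> complex mat) \<Rightarrow> nat \<Rightarrow> ('g \<Rightarrow> complex mat) \<Rightarrow> nat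
    \<Rightarrow> complex mat \<Rightarrow> complex mat \<Rightarrow> real" where
  "H_eta \<mu> UB dB UX dX \<eta> \<tau> = Hmin dB dX (twirl \<mu> (\<lambda>g. conj_mat (UB g)) UX dB dX (kron \<eta> \<tau>))"

definition Delta_H :: "'g measure \<Rightarrow> ('g \<Rightarrow> complex mat) \<Rightarrow> nat \<Rightarrow> ('g \<Rightarrow> complex mat) \<Rightarrow> nat
    \<Rightarrow> complex mat \<Rightarrow> complex mat \<Rightarrow> complex mat \<Rightarrow> real" where
  "Delta_H \<mu> UA dA UB dB \<rho> \<sigma> \<eta> = H_eta \<mu> UB dB UB dB \<eta> \<sigma> - H_eta \<mu> UB dB UA dA \<eta> \<rho>"

definition depol :: "nat \<Rightarrow> real \<Rightarrow> complex mat \<Rightarrow> complex mat" where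
  "depol d p \<eta> = complex_of_real p \<cdot>\<^sub>m \<eta> + complex_of_real ((1 - p) / real d) \<cdot>\<^sub>m 1\<^sub>m d"

end

theory Submission
  imports Defs
begin

lemma sum_block: fixes f :: "nat \<Rightarrow> 'a::comm_monoid_add"
  shows "sum f {s*n..<s*n+n} = (\<Sum>u<n. f (s*n+u))"
  using sum.shift_bounds_nat_ivl[of f 0 "s*n" n] by (simp add: add.commute atLeast0LessThan)

lemma sum_div_mod: fixes f :: "nat \<Rightarrow> 'a::comm_monoid_add" shows "(\<Sum>t<b*n. f t) = (\<Sum>s<b. \<Sum>u<n. f (s*n+u))"
  using sum.nat_group[of f n b] by (simp add: sum_block)

lemma divmod_simps[simp]:
  fixes s u n :: nat assumes "u < n" shows "(s*n+u) div n = s" "(s*n+u) mod n = u"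
  using assms by auto

lemma mult_entry:
  assumes "A \<in> carrier_mat m k" "B \<in> carrier_mat k n" "i < m" "j < n"
  shows "(A*B) $$ (i,j) = (\<Sum>t<k. A$$(i,t) * B$$(t,j))"
  using assms by (simp add: scalar_prod_def atLeast0LessThan)

declare index_mult_mat(1)[simp del]

lemma adj_eq: "mat_adjoint A = mat (dim_col A) (dim_row A) (\<lambda>(i,j). cnj (A $$ (j,i)))"
  by (auto intro!: eq_matI simp: mat_adjoint_def mat_of_rows_index)

lemma adj_carrier[simp]: fixes A :: "complex mat" shows "A \<in> carrier_mat m n \<Longrightarrow> mat_adjoint A \<in> carrier_mat n m"
  by (simp add: adj_eq)

lemma adj_dims[simp]: fixes A :: "complex mat" shows "dim_row (mat_adjoint A) = dim_col A" "dim_col (mat_adjoint A) = dim_row A"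
  by (simp_all add: adj_eq)

lemma adj_index[simp]: fixes A :: "complex mat" shows "i < dim_col A \<Longrightarrow> j < dim_row A \<Longrightarrow> mat_adjoint A $$ (i,j) = cnj (A $$ (j,i))"
  by (simp add: adj_eq)

lemma kron_dims[simp]: "dim_row (kron A B) = dim_row A * dim_row B" "dim_col (kron A B) = dim_col A * dim_col B"
  by (simp_all add: kron_def)

lemma kron_carrier[simp]: "A \<in> carrier_mat a b \<Longrightarrow> B \<in> carrier_mat m n \<Longrightarrow> kron A B \<in> carrier_mat (a*m) (b*n)"
  by (simp add: kron_def)

lemma kron_index:
  assumes "A \<in> carrier_mat a b" "B \<in> carrier_mat m n" "i < a*m" "j < b*n"
  shows "kron A B $$ (i,j) = A $$ (i div m, j div n) * B $$ (i mod m, j mod n)"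
  using assms by (simp add: kron_def)

lemma sandwich:
  assumes "U \<in> carrier_mat m n" "A \<in> carrier_mat n n" "i < m" "j < m"
  shows "(U*A*mat_adjoint U) $$ (i,j) = (\<Sum>k<n. \<Sum>l<n. U$$(i,k) * A$$(k,l) * cnj (U$$(j,l)))"
proof -
  have "(U*A*mat_adjoint U) $$ (i,j) = (\<Sum>l<n. (U*A)$$(i,l) * mat_adjoint U $$ (l,j))"
    using assms by (intro mult_entry) auto
  also have "\<dots> = (\<Sum>l<n. (\<Sum>k<n. U$$(i,k) * A$$(k,l)) * cnj (U$$(j,l)))"
    using assms by (intro sum.cong refl) (subst mult_entry[of U m n A n], auto)
  also have "\<dots> = (\<Sum>k<n. \<Sum>l<n. U$$(i,k) * A$$(k,l) * cnj (U$$(j,l)))"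
    by (simp add: sum_distrib_right mult.assoc) (rule sum.swap)
  finally show ?thesis .
qed


lemma idx_bound: fixes s u b n :: nat assumes "s < b" "u < n" shows "s*n+u < b*n"
proof -
  have "s*n+u < s*n+n" using assms by simp
  also have "\<dots> = Suc s * n" by simp
  also have "\<dots> \<le> b*n" using assms by (intro mult_right_mono) auto
  finally show ?thesis .
qed

lemma div_bound: fixes i a m :: nat assumes "i < a*m" shows "i div m < a" "i mod m < m"
proof -
  show "i div m < a" using assms less_mult_imp_div_less by blast
  have "m > 0" using assms by (cases m) auto
  then show "i mod m < m" by simp
qed

lemma kron_mult:
  assumes A: "A \<in> carrier_mat a b" and B: "B \<in> carrier_mat m n"
    and C: "C \<in> carrier_mat b c" and D: "D \<in> carrier_mat n q"
  shows "kron A B * kron C D = kron (A*C) (B*D)"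
proof (rule eq_matI)
  fix i j assume "i < dim_row (kron (A*C) (B*D))" "j < dim_col (kron (A*C) (B*D))"
  then have i: "i < a*m" and j: "j < c*q" using A B C D by auto
  note ib = div_bound[OF i] and jb = div_bound[OF j]
  have "(kron A B * kron C D) $$ (i,j) = (\<Sum>t<b*n. kron A B $$ (i,t) * kron C D $$ (t,j))"
    using A B C D i j by (intro mult_entry) auto
  also have "\<dots> = (\<Sum>s<b. \<Sum>u<n. kron A B $$ (i,s*n+u) * kron C D $$ (s*n+u,j))"
    by (rule sum_div_mod)
  also have "\<dots> = (\<Sum>s<b. \<Sum>u<n. (A $$ (i div m, s) * C $$ (s, j div q)) * (B $$ (i mod m, u) * D $$ (u, j mod q)))"
    using A B C D i j idx_bound by (intro sum.cong refl) (simp add: kron_index[OF A B] kron_index[OF C D])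
  also have "\<dots> = (\<Sum>s<b. A $$ (i div m, s) * C $$ (s, j div q)) * (\<Sum>u<n. B $$ (i mod m, u) * D $$ (u, j mod q))"
    by (simp add: sum_product)
  also have "\<dots> = (A*C) $$ (i div m, j div q) * (B*D) $$ (i mod m, j mod q)"
    using A B C D ib jb by (simp add: mult_entry[OF A C] mult_entry[OF B D])
  also have "\<dots> = kron (A*C) (B*D) $$ (i,j)"
    using A B C D i j by (subst kron_index) auto
  finally show "(kron A B * kron C D) $$ (i,j) = kron (A*C) (B*D) $$ (i,j)" .
qed (use A B C D in auto)

lemma adj_kron:
  assumes A: "A \<in> carrier_mat a b" and B: "B \<in> carrier_mat m n"
  shows "mat_adjoint (kron A B) = kron (mat_adjoint A) (mat_adjoint B)"
proof (rule eq_matI)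
  fix i j assume "i < dim_row (kron (mat_adjoint A) (mat_adjoint B))" "j < dim_col (kron (mat_adjoint A) (mat_adjoint B))"
  then have i: "i < b*n" and j: "j < a*m" using A B by auto
  note ib = div_bound[OF i] and jb = div_bound[OF j]
  show "mat_adjoint (kron A B) $$ (i,j) = kron (mat_adjoint A) (mat_adjoint B) $$ (i,j)"
    using A B i j ib jb by (simp add: kron_index[OF A B] kron_index[of "mat_adjoint A" b a "mat_adjoint B" n m])
qed (use A B in auto)

lemma conj_mat_carrier[simp]: "A \<in> carrier_mat m n \<Longrightarrow> conj_mat A \<in> carrier_mat m n"
  by (simp add: conj_mat_def)

lemma conj_mat_index[simp]: "i < dim_row A \<Longrightarrow> j < dim_col A \<Longrightarrow> conj_mat A $$ (i,j) = cnj (A $$ (i,j))"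
  "dim_row (conj_mat A) = dim_row A" "dim_col (conj_mat A) = dim_col A"
  by (simp_all add: conj_mat_def)

lemma unitary_entries:
  assumes "unitary_mat n U" "i < n" "j < n"
  shows "(\<Sum>t<n. U $$ (i,t) * cnj (U $$ (j,t))) = (if i = j then 1 else 0)"
    "(\<Sum>t<n. cnj (U $$ (t,i)) * U $$ (t,j)) = (if i = j then 1 else 0)"
proof -
  have U: "U \<in> carrier_mat n n" using assms unfolding unitary_mat_def by auto
  have "(U * mat_adjoint U) $$ (i,j) = 1\<^sub>m n $$ (i,j)" using assms unfolding unitary_mat_def by auto
  then show "(\<Sum>t<n. U $$ (i,t) * cnj (U $$ (j,t))) = (if i = j then 1 else 0)"
    using assms U by (simp add: mult_entry[of U n n "mat_adjoint U" n])
  have "(mat_adjoint U * U) $$ (i,j) = 1\<^sub>m n $$ (i,j)" using assms unfolding unitary_mat_def by auto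
  then show "(\<Sum>t<n. cnj (U $$ (t,i)) * U $$ (t,j)) = (if i = j then 1 else 0)"
    using assms U by (simp add: mult_entry[of "mat_adjoint U" n n U n])
qed

lemma unitary_conj:
  assumes "unitary_mat n U" shows "unitary_mat n (conj_mat U)"
proof -
  have U: "U \<in> carrier_mat n n" using assms unfolding unitary_mat_def by auto
  have 1: "conj_mat U * mat_adjoint (conj_mat U) = 1\<^sub>m n"
  proof (rule eq_matI)
    fix i j assume "i < dim_row (1\<^sub>m n)" "j < dim_col (1\<^sub>m n)"
    then have ij: "i < n" "j < n" by auto
    have "(conj_mat U * mat_adjoint (conj_mat U)) $$ (i,j) = (\<Sum>t<n. cnj (U $$ (i,t) * cnj (U $$ (j,t))))"
      using U ij by (subst mult_entry[of _ n n _ n]) auto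
    also have "\<dots> = cnj (\<Sum>t<n. U $$ (i,t) * cnj (U $$ (j,t)))" by simp
    also have "\<dots> = 1\<^sub>m n $$ (i,j)" using unitary_entries(1)[OF assms ij] ij by simp
    finally show "(conj_mat U * mat_adjoint (conj_mat U)) $$ (i,j) = 1\<^sub>m n $$ (i,j)" .
  qed (use U in auto)
  have 2: "mat_adjoint (conj_mat U) * conj_mat U = 1\<^sub>m n"
  proof (rule eq_matI)
    fix i j assume "i < dim_row (1\<^sub>m n)" "j < dim_col (1\<^sub>m n)"
    then have ij: "i < n" "j < n" by auto
    have "(mat_adjoint (conj_mat U) * conj_mat U) $$ (i,j) = (\<Sum>t<n. cnj (cnj (U $$ (t,i)) * U $$ (t,j)))"
      using U ij by (subst mult_entry[of _ n n _ n]) auto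
    also have "\<dots> = cnj (\<Sum>t<n. cnj (U $$ (t,i)) * U $$ (t,j))" by simp
    also have "\<dots> = 1\<^sub>m n $$ (i,j)" using unitary_entries(2)[OF assms ij] ij by simp
    finally show "(mat_adjoint (conj_mat U) * conj_mat U) $$ (i,j) = 1\<^sub>m n $$ (i,j)" .
  qed (use U in auto)
  show ?thesis using 1 2 U unfolding unitary_mat_def by auto
qed

lemma KI:
  assumes V: "V \<in> carrier_mat d d" and U: "U \<in> carrier_mat n n"
    and A: "A \<in> carrier_mat d d" and T: "T \<in> carrier_mat n n"
  shows "kron V U * kron A T * mat_adjoint (kron V U) = kron (V * A * mat_adjoint V) (U * T * mat_adjoint U)"
proof -
  have "kron V U * kron A T = kron (V*A) (U*T)" by (rule kron_mult[OF V U A T])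
  moreover have "mat_adjoint (kron V U) = kron (mat_adjoint V) (mat_adjoint U)" by (rule adj_kron[OF V U])
  moreover have "kron (V*A) (U*T) * kron (mat_adjoint V) (mat_adjoint U) = kron (V * A * mat_adjoint V) (U * T * mat_adjoint U)"
    using V U A T by (intro kron_mult) auto
  ultimately show ?thesis by simp
qed


definition qf :: "nat \<Rightarrow> complex mat \<Rightarrow> complex vec \<Rightarrow> complex" where
  "qf n M v = (\<Sum>i<n. \<Sum>j<n. cnj (v$i) * M$$(i,j) * v$j)"

lemma qf_eq: assumes "M \<in> carrier_mat n n" "v \<in> carrier_vec n"
  shows "conjugate v \<bullet> (M *\<^sub>v v) = qf n M v"
  using assms by (simp add: qf_def scalar_prod_def atLeast0LessThan sum_distrib_left mult.assoc)

lemma psd_iff: "psd_mat n M \<longleftrightarrow> M \<in> carrier_mat n n \<and> (\<forall>v\<in>carrier_vec n. 0 \<le> qf n M v)"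
  unfolding psd_mat_def using qf_eq by auto

definition herm :: "nat \<Rightarrow> complex mat \<Rightarrow> bool" where
  "herm n M \<longleftrightarrow> (\<forall>i<n. \<forall>j<n. M$$(i,j) = cnj (M$$(j,i)))"

lemma sum_two: fixes f :: "nat \<Rightarrow> complex"
  assumes "i < n" "j < n" "i \<noteq> j"
  shows "(\<Sum>t<n. f t * (if t = i then x else if t = j then y else 0)) = f i * x + f j * y"
proof -
  have "(\<Sum>t<n. f t * (if t = i then x else if t = j then y else 0))
      = (\<Sum>t<n. (if t = i then f t * x else 0) + (if t = j then f t * y else 0))"
    using assms by (intro sum.cong refl) auto
  also have "\<dots> = f i * x + f j * y" using assms by (simp add: sum.distrib)
  finally show ?thesis .
qed

lemma sum_one: fixes f :: "nat \<Rightarrow> complex"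
  assumes "i < n"
  shows "(\<Sum>t<n. f t * (if t = i then x else 0)) = f i * x"
proof -
  have "(\<Sum>t<n. f t * (if t = i then x else 0)) = (\<Sum>t<n. (if t = i then f t * x else 0))"
    by (intro sum.cong refl) auto
  also have "\<dots> = f i * x" using assms by simp
  finally show ?thesis .
qed

lemma sum_one': fixes f :: "nat \<Rightarrow> complex"
  assumes "i < n"
  shows "(\<Sum>t<n. (if t = i then x else 0) * f t) = x * f i"
  using sum_one[OF assms, of f x] by (simp add: mult.commute)

lemma qf_two:
  assumes "i < n" "j < n" "i \<noteq> j"
  shows "qf n M (vec n (\<lambda>t. if t = i then x else if t = j then y else 0))
     = cnj x * M$$(i,i) * x + cnj x * M$$(i,j) * y + cnj y * M$$(j,i) * x + cnj y * M$$(j,j) * y"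
proof -
  let ?v = "vec n (\<lambda>t. if t = i then x else if t = j then y else 0)"
  have "qf n M ?v = (\<Sum>s<n. \<Sum>t<n. (cnj (?v$s) * M$$(s,t)) * (if t = i then x else if t = j then y else 0))"
    unfolding qf_def by (intro sum.cong refl) auto
  also have "\<dots> = (\<Sum>s<n. (cnj (?v$s) * M$$(s,i)) * x + (cnj (?v$s) * M$$(s,j)) * y)"
    using assms by (intro sum.cong refl) (rule sum_two)
  also have "\<dots> = (\<Sum>s<n. (M$$(s,i) * x + M$$(s,j) * y) * (if s = i then cnj x else if s = j then cnj y else 0))"
    by (intro sum.cong refl) (auto simp: algebra_simps)
  also have "\<dots> = (M$$(i,i) * x + M$$(i,j) * y) * cnj x + (M$$(j,i) * x + M$$(j,j) * y) * cnj y"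
    using assms by (rule sum_two)
  finally show ?thesis by (simp add: algebra_simps)
qed

lemma qf_one:
  assumes "i < n"
  shows "qf n M (vec n (\<lambda>t. if t = i then 1 else 0)) = M$$(i,i)"
proof -
  let ?v = "vec n (\<lambda>t. if t = i then (1::complex) else 0)"
  have "qf n M ?v = (\<Sum>s<n. \<Sum>t<n. (cnj (?v$s) * M$$(s,t)) * (if t = i then 1 else 0))"
    unfolding qf_def by (intro sum.cong refl) auto
  also have "\<dots> = (\<Sum>s<n. (cnj (?v$s) * M$$(s,i)) * 1)"
    using assms by (intro sum.cong refl) (rule sum_one)
  also have "\<dots> = (\<Sum>s<n. M$$(s,i) * (if s = i then 1 else 0))"
    by (intro sum.cong refl) auto
  also have "\<dots> = M$$(i,i)" using sum_one[OF assms] by simp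
  finally show ?thesis .
qed

lemma psd_herm: assumes "psd_mat n M" shows "herm n M"
  unfolding herm_def
proof (intro allI impI)
  fix i j assume ij: "i < n" "j < n"
  have M: "M \<in> carrier_mat n n" and q: "\<And>v. v \<in> carrier_vec n \<Longrightarrow> 0 \<le> qf n M v"
    using assms by (auto simp: psd_iff)
  have d: "Im (M$$(k,k)) = 0" if "k < n" for k
    using q[of "vec n (\<lambda>t. if t = k then 1 else 0)"] qf_one[OF that, of M] by (auto simp: less_eq_complex_def)
  show "M$$(i,j) = cnj (M$$(j,i))"
  proof (cases "i = j")
    case True then show ?thesis using d[OF ij(1)] by (simp add: complex_eq_iff)
  next
    case False
    have 1: "Im (qf n M (vec n (\<lambda>t. if t = i then 1 else if t = j then 1 else 0))) = 0"
      using q[of "vec n (\<lambda>t. if t = i then 1 else if t = j then 1 else 0)"] by (auto simp: less_eq_complex_def)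
    have 2: "Im (qf n M (vec n (\<lambda>t. if t = i then 1 else if t = j then \<i> else 0))) = 0"
      using q[of "vec n (\<lambda>t. if t = i then 1 else if t = j then \<i> else 0)"] by (auto simp: less_eq_complex_def)
    from 1 2 d[OF ij(1)] d[OF ij(2)] show ?thesis
      unfolding qf_two[OF ij False] by (simp add: complex_eq_iff)
  qed
qed

lemma qf_herm_real: assumes "herm n M" shows "Im (qf n M v) = 0"
proof -
  have "cnj (qf n M v) = (\<Sum>i<n. \<Sum>j<n. v$i * cnj (M$$(i,j)) * cnj (v$j))"
    by (simp add: qf_def)
  also have "\<dots> = (\<Sum>i<n. \<Sum>j<n. cnj (v$j) * M$$(j,i) * v$i)"
  proof (intro sum.cong refl)
    fix i j assume "i \<in> {..<n}" "j \<in> {..<n}"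
    then have "cnj (M$$(i,j)) = M$$(j,i)" using assms unfolding herm_def by (metis complex_cnj_cnj lessThan_iff)
    then show "v$i * cnj (M$$(i,j)) * cnj (v$j) = cnj (v$j) * M$$(j,i) * v$i" by simp
  qed
  also have "\<dots> = qf n M v" unfolding qf_def by (rule sum.swap)
  finally show ?thesis by (metis Reals_cnj_iff complex_is_Real_iff)
qed

lemma qf_lin:
  assumes "\<forall>i<n. \<forall>j<n. C$$(i,j) = a * A$$(i,j) + b * B$$(i,j)"
  shows "qf n C v = a * qf n A v + b * qf n B v"
proof -
  have "qf n C v = (\<Sum>i<n. \<Sum>j<n. a * (cnj (v$i) * A$$(i,j) * v$j) + b * (cnj (v$i) * B$$(i,j) * v$j))"
    unfolding qf_def using assms by (intro sum.cong refl) (simp add: algebra_simps)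
  then show ?thesis by (simp add: qf_def sum.distrib sum_distrib_left)
qed

lemma nonneg_of_real: "0 \<le> r \<Longrightarrow> 0 \<le> (complex_of_real r)"
  by (simp add: less_eq_complex_def)

lemma psd_comb:
  assumes "psd_mat n A" "psd_mat n B" "C \<in> carrier_mat n n" "0 \<le> a" "0 \<le> b"
    "\<forall>i<n. \<forall>j<n. C$$(i,j) = of_real a * A$$(i,j) + of_real b * B$$(i,j)"
  shows "psd_mat n C"
  unfolding psd_iff
proof (intro conjI ballI)
  fix v :: "complex vec" assume v: "v \<in> carrier_vec n"
  have "qf n C v = of_real a * qf n A v + of_real b * qf n B v" by (rule qf_lin[OF assms(6)])
  moreover have "0 \<le> qf n A v" "0 \<le> qf n B v" using assms(1,2) v by (auto simp: psd_iff)
  ultimately show "0 \<le> qf n C v"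
    using assms(4,5) by (simp add: nonneg_of_real add_nonneg_nonneg mult_nonneg_nonneg)
qed (rule assms(3))

lemma qf_bound:
  "cmod (qf n M v) \<le> (\<Sum>i<n. \<Sum>j<n. cmod (M$$(i,j))) * (\<Sum>k<n. (cmod (v$k))^2)"
proof -
  let ?N = "\<Sum>k<n. (cmod (v$k))^2"
  have vb: "cmod (v$i) \<le> sqrt ?N" if "i < n" for i
  proof -
    have "(cmod (v$i))^2 \<le> ?N" using that by (intro member_le_sum) auto
    then show ?thesis by (simp add: real_le_rsqrt)
  qed
  have N0: "0 \<le> ?N" by (simp add: sum_nonneg)
  have "cmod (qf n M v) \<le> (\<Sum>i<n. \<Sum>j<n. cmod (cnj (v$i) * M$$(i,j) * v$j))"
    unfolding qf_def by (rule order_trans[OF norm_sum sum_mono]) (rule norm_sum)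
  also have "\<dots> \<le> (\<Sum>i<n. \<Sum>j<n. cmod (M$$(i,j)) * ?N)"
  proof (intro sum_mono)
    fix i j assume "i \<in> {..<n}" "j \<in> {..<n}"
    then have "cmod (v$i) * cmod (v$j) \<le> sqrt ?N * sqrt ?N"
      using vb N0 by (intro mult_mono) auto
    also have "\<dots> = ?N" using N0 by simp
    finally have "cmod (v$i) * cmod (v$j) \<le> ?N" .
    then have "cmod (M$$(i,j)) * (cmod (v$i) * cmod (v$j)) \<le> cmod (M$$(i,j)) * ?N"
      by (intro mult_left_mono) auto
    then show "cmod (cnj (v$i) * M$$(i,j) * v$j) \<le> cmod (M$$(i,j)) * ?N"
      by (simp add: norm_mult algebra_simps)
  qed
  also have "\<dots> = (\<Sum>i<n. \<Sum>j<n. cmod (M$$(i,j))) * ?N" by (simp add: sum_distrib_right)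
  finally show ?thesis .
qed


definition ptr :: "nat \<Rightarrow> nat \<Rightarrow> complex mat \<Rightarrow> complex mat" where
  "ptr d n M = mat n n (\<lambda>(k,l). \<Sum>r<d. M$$(r*n+k, r*n+l))"

lemma sum_block_delta:
  fixes f g :: "nat \<Rightarrow> complex"
  assumes "r < d"
  shows "(\<Sum>t<d*n. (if t div n = r then f (t mod n) else 0) * g t) = (\<Sum>u<n. f u * g (r*n+u))"
proof -
  have "(\<Sum>t<d*n. (if t div n = r then f (t mod n) else 0) * g t)
     = (\<Sum>s<d. \<Sum>u<n. (if (s*n+u) div n = r then f ((s*n+u) mod n) else 0) * g (s*n+u))"
    by (rule sum_div_mod)
  also have "\<dots> = (\<Sum>s<d. if s = r then (\<Sum>u<n. f u * g (s*n+u)) else 0)"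
    by (intro sum.cong refl) auto
  also have "\<dots> = (\<Sum>u<n. f u * g (r*n+u))" using assms by simp
  finally show ?thesis .
qed

lemma qf_block:
  assumes r: "r < d"
  shows "qf (d*n) M (vec (d*n) (\<lambda>i. if i div n = r then w$(i mod n) else 0))
       = (\<Sum>k<n. \<Sum>l<n. cnj (w$k) * M$$(r*n+k, r*n+l) * w$l)"
proof -
  let ?x = "vec (d*n) (\<lambda>i. if i div n = r then w$(i mod n) else 0)"
  have "qf (d*n) M ?x = (\<Sum>i<d*n. (if i div n = r then cnj (w$(i mod n)) else 0) *
          (\<Sum>j<d*n. (if j div n = r then w$(j mod n) else 0) * M$$(i,j)))"
    unfolding qf_def by (intro sum.cong refl) (auto simp: sum_distrib_left algebra_simps)
  also have "\<dots> = (\<Sum>i<d*n. (if i div n = r then cnj (w$(i mod n)) else 0) *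
          (\<Sum>l<n. w$l * M$$(i,r*n+l)))"
  proof -
    have inner: "(\<Sum>j<d*n. (if j div n = r then w$(j mod n) else 0) * M$$(i,j)) = (\<Sum>l<n. w$l * M$$(i,r*n+l))" for i
      using sum_block_delta[OF r, where f="\<lambda>u. w$u" and g="\<lambda>j. M$$(i,j)" and n=n] by simp
    show ?thesis by (simp only: inner)
  qed
  also have "\<dots> = (\<Sum>k<n. cnj (w$k) * (\<Sum>l<n. w$l * M$$(r*n+k,r*n+l)))"
    using r by (rule sum_block_delta)
  also have "\<dots> = (\<Sum>k<n. \<Sum>l<n. cnj (w$k) * M$$(r*n+k, r*n+l) * w$l)"
    by (simp add: sum_distrib_left algebra_simps)
  finally show ?thesis .
qed

lemma F3:
  assumes L: "loewner_le (d*n) \<Omega> (kron (1\<^sub>m d) Y)" and Y: "Y \<in> carrier_mat n n"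
    and w: "w \<in> carrier_vec n"
  shows "0 \<le> of_nat d * qf n Y w - qf n (ptr d n \<Omega>) w"
proof -
  let ?D = "kron (1\<^sub>m d) Y - \<Omega>"
  have Om: "\<Omega> \<in> carrier_mat (d*n) (d*n)" and psd: "psd_mat (d*n) ?D"
    using L unfolding loewner_le_def by auto
  let ?x = "\<lambda>r. vec (d*n) (\<lambda>i. if i div n = r then w$(i mod n) else 0)"
  have each: "0 \<le> (\<Sum>k<n. \<Sum>l<n. cnj (w$k) * ?D$$(r*n+k, r*n+l) * w$l)" if r: "r < d" for r
  proof -
    have "0 \<le> qf (d*n) ?D (?x r)" using psd by (auto simp: psd_iff)
    then show ?thesis using qf_block[OF r] by simp
  qed
  have ent: "?D$$(r*n+k, r*n+l) = Y$$(k,l) - \<Omega>$$(r*n+k, r*n+l)" if "r < d" "k < n" "l < n" for r k l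
    using that Om Y idx_bound[of r d k n] idx_bound[of r d l n]
    by (simp add: kron_index[of "1\<^sub>m d" d d Y n n])
  have "0 \<le> (\<Sum>r<d. \<Sum>k<n. \<Sum>l<n. cnj (w$k) * ?D$$(r*n+k, r*n+l) * w$l)"
    by (rule sum_nonneg) (simp add: each)
  also have "\<dots> = (\<Sum>r<d. \<Sum>k<n. \<Sum>l<n. cnj (w$k) * Y$$(k,l) * w$l - cnj (w$k) * \<Omega>$$(r*n+k, r*n+l) * w$l)"
  proof (intro sum.cong refl)
    fix r k l assume "r \<in> {..<d}" "k \<in> {..<n}" "l \<in> {..<n}"
    then show "cnj (w$k) * ?D$$(r*n+k, r*n+l) * w$l = cnj (w$k) * Y$$(k,l) * w$l - cnj (w$k) * \<Omega>$$(r*n+k, r*n+l) * w$l"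
      using ent[of r k l] by (simp add: left_diff_distrib right_diff_distrib)
  qed
  also have "\<dots> = of_nat d * qf n Y w - (\<Sum>r<d. \<Sum>k<n. \<Sum>l<n. cnj (w$k) * \<Omega>$$(r*n+k, r*n+l) * w$l)"
    by (simp add: sum_subtractf qf_def)
  also have "(\<Sum>r<d. \<Sum>k<n. \<Sum>l<n. cnj (w$k) * \<Omega>$$(r*n+k, r*n+l) * w$l) = qf n (ptr d n \<Omega>) w"
  proof -
    have "qf n (ptr d n \<Omega>) w = (\<Sum>k<n. \<Sum>l<n. \<Sum>r<d. cnj (w$k) * \<Omega>$$(r*n+k, r*n+l) * w$l)"
      unfolding qf_def ptr_def by (intro sum.cong refl) (simp add: sum_distrib_left sum_distrib_right)
    also have "\<dots> = (\<Sum>k<n. \<Sum>r<d. \<Sum>l<n. cnj (w$k) * \<Omega>$$(r*n+k, r*n+l) * w$l)"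
      by (rule sum.cong[OF refl]) (rule sum.swap)
    also have "\<dots> = (\<Sum>r<d. \<Sum>k<n. \<Sum>l<n. cnj (w$k) * \<Omega>$$(r*n+k, r*n+l) * w$l)"
      by (rule sum.swap)
    finally show ?thesis by simp
  qed
  finally show ?thesis .
qed

lemma psd_transfer:
  assumes L: "loewner_le (d*n) \<Omega> (kron (1\<^sub>m d) Y)" and Y: "Y \<in> carrier_mat n n"
    and d: "d > 0" and P: "psd_mat n (ptr d n \<Omega>)"
  shows "psd_mat n Y"
  unfolding psd_iff
proof (intro conjI ballI)
  fix w :: "complex vec" assume w: "w \<in> carrier_vec n"
  have 1: "0 \<le> of_nat d * qf n Y w - qf n (ptr d n \<Omega>) w" by (rule F3[OF L Y w])
  have 2: "0 \<le> qf n (ptr d n \<Omega>) w" using P w by (auto simp: psd_iff)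
  have "0 \<le> of_nat d * qf n Y w" using add_nonneg_nonneg[OF 1 2] by simp
  then show "0 \<le> qf n Y w" using d by (auto simp: less_eq_complex_def zero_less_mult_iff zero_le_mult_iff)
qed (rule Y)

lemma mtrace_carrier: "A \<in> carrier_mat n n \<Longrightarrow> mtrace A = (\<Sum>i<n. A$$(i,i))"
  by (simp add: mtrace_def)

lemma trace_bound:
  assumes L: "loewner_le (d*n) \<Omega> (kron (1\<^sub>m d) Y)" and Y: "Y \<in> carrier_mat n n"
  shows "Re (mtrace (ptr d n \<Omega>)) \<le> real d * Re (mtrace Y)"
proof -
  have "0 \<le> of_nat d * Y$$(k,k) - ptr d n \<Omega> $$ (k,k)" if k: "k < n" for k
    using F3[OF L Y, of "vec n (\<lambda>t. if t = k then 1 else 0)"] qf_one[OF k] by simp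
  then have "0 \<le> (\<Sum>k<n. of_nat d * Y$$(k,k) - ptr d n \<Omega> $$ (k,k))" by (intro sum_nonneg) auto
  also have "\<dots> = of_nat d * mtrace Y - mtrace (ptr d n \<Omega>)"
    using Y by (simp add: mtrace_carrier[OF Y] mtrace_def ptr_def sum_subtractf sum_distrib_left)
  finally show ?thesis by (simp add: less_eq_complex_def)
qed


definition feas :: "nat \<Rightarrow> nat \<Rightarrow> complex mat \<Rightarrow> real set" where
  "feas d n \<Omega> = {Re (mtrace Y) | Y. psd_mat n Y \<and> loewner_le (d * n) \<Omega> (kron (1\<^sub>m d) Y)}"

lemma Hmin_feas: "Hmin d n \<Omega> = - log 2 (Inf (feas d n \<Omega>))"
  by (simp add: Hmin_def feas_def)

lemma kron1_index:
  assumes "Y \<in> carrier_mat n n" "i < d*n" "j < d*n"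
  shows "kron (1\<^sub>m d) Y $$ (i,j) = (if i div n = j div n then Y$$(i mod n, j mod n) else 0)"
  using assms div_bound[of i d n] div_bound[of j d n] by (simp add: kron_index[of "1\<^sub>m d" d d Y n n])

lemma feas_affine:
  assumes Om: "\<Omega> \<in> carrier_mat (d*n) (d*n)" and Om': "\<Omega>' \<in> carrier_mat (d*n) (d*n)"
    and d: "d > 0" and p: "p > 0" and c: "c \<ge> 0"
    and T: "psd_mat n T" and P: "ptr d n \<Omega> = T"
    and ent: "\<forall>i<d*n. \<forall>j<d*n. \<Omega>'$$(i,j) = of_real p * \<Omega>$$(i,j) + of_real c * kron (1\<^sub>m d) T $$ (i,j)"
  shows "feas d n \<Omega>' = (\<lambda>s. p * s + c * Re (mtrace T)) ` feas d n \<Omega>"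
proof
  have Tc: "T \<in> carrier_mat n n" using T by (simp add: psd_iff)
  show "feas d n \<Omega>' \<subseteq> (\<lambda>s. p * s + c * Re (mtrace T)) ` feas d n \<Omega>"
  proof
    fix s assume "s \<in> feas d n \<Omega>'"
    then obtain Y where s: "s = Re (mtrace Y)" and Y: "psd_mat n Y" and L: "loewner_le (d*n) \<Omega>' (kron (1\<^sub>m d) Y)"
      unfolding feas_def by auto
    have Yc: "Y \<in> carrier_mat n n" using Y by (simp add: psd_iff)
    define Y' where "Y' = mat n n (\<lambda>(i,j). (Y$$(i,j) - of_real c * T$$(i,j)) / of_real p)"
    have Y'c: "Y' \<in> carrier_mat n n" by (simp add: Y'_def)
    have psdD: "psd_mat (d*n) (kron (1\<^sub>m d) Y - \<Omega>')" using L by (simp add: loewner_le_def)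
    have L': "loewner_le (d*n) \<Omega> (kron (1\<^sub>m d) Y')"
      unfolding loewner_le_def
    proof (intro conjI)
      show "psd_mat (d*n) (kron (1\<^sub>m d) Y' - \<Omega>)"
      proof (rule psd_comb[OF psdD psdD _ _ order_refl])
        show "kron (1\<^sub>m d) Y' - \<Omega> \<in> carrier_mat (d*n) (d*n)" using Om Y'c by auto
        show "0 \<le> 1/p" using p by simp
        show "\<forall>i<d*n. \<forall>j<d*n. (kron (1\<^sub>m d) Y' - \<Omega>) $$ (i,j) =
           of_real (1/p) * (kron (1\<^sub>m d) Y - \<Omega>') $$ (i,j) + of_real 0 * (kron (1\<^sub>m d) Y - \<Omega>') $$ (i,j)"
        proof (intro allI impI)
          fix i j assume ij: "i < d*n" "j < d*n"
          note mb = div_bound[OF ij(1)] div_bound[OF ij(2)]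
          have e1: "kron (1\<^sub>m d) Y' $$ (i,j) = (if i div n = j div n then Y'$$(i mod n, j mod n) else 0)"
            using ij by (rule kron1_index[OF Y'c])
          have e2: "kron (1\<^sub>m d) Y $$ (i,j) = (if i div n = j div n then Y$$(i mod n, j mod n) else 0)"
            using ij by (rule kron1_index[OF Yc])
          have e3: "kron (1\<^sub>m d) T $$ (i,j) = (if i div n = j div n then T$$(i mod n, j mod n) else 0)"
            using ij by (rule kron1_index[OF Tc])
          have e4: "Y'$$(i mod n, j mod n) = (Y$$(i mod n, j mod n) - of_real c * T$$(i mod n, j mod n)) / of_real p"
            using mb by (simp add: Y'_def)
          have e5: "\<Omega>'$$(i,j) = of_real p * \<Omega>$$(i,j) + of_real c * kron (1\<^sub>m d) T $$ (i,j)"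
            using ent ij by auto
          show "(kron (1\<^sub>m d) Y' - \<Omega>) $$ (i,j) =
           of_real (1/p) * (kron (1\<^sub>m d) Y - \<Omega>') $$ (i,j) + of_real 0 * (kron (1\<^sub>m d) Y - \<Omega>') $$ (i,j)"
            using ij Om Om' Yc Y'c p by (simp add: e1 e2 e3 e4 e5 field_simps)
        qed
      qed
    qed (use Om Y'c in auto)
    have Y'psd: "psd_mat n Y'" using psd_transfer[OF L' Y'c d] P T by simp
    have "Re (mtrace Y') \<in> feas d n \<Omega>" unfolding feas_def using Y'psd L' by auto
    moreover have "s = p * Re (mtrace Y') + c * Re (mtrace T)"
    proof -
      have t1: "mtrace Y' = (\<Sum>i<n. Y'$$(i,i))" by (rule mtrace_carrier[OF Y'c])
      have t2: "(\<Sum>i<n. Y'$$(i,i)) = (\<Sum>i<n. (Y$$(i,i) - of_real c * T$$(i,i)) / of_real p)"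
        by (intro sum.cong refl) (simp add: Y'_def)
      have "mtrace Y = of_real p * mtrace Y' + of_real c * mtrace T"
        unfolding t1 t2 mtrace_carrier[OF Yc] mtrace_carrier[OF Tc]
        using p by (simp add: sum_distrib_left sum.distrib[symmetric] sum_divide_distrib[symmetric] sum_subtractf)
      then show ?thesis using s by simp
    qed
    ultimately show "s \<in> (\<lambda>s. p * s + c * Re (mtrace T)) ` feas d n \<Omega>" by auto
  qed
  show "(\<lambda>s. p * s + c * Re (mtrace T)) ` feas d n \<Omega> \<subseteq> feas d n \<Omega>'"
  proof
    fix s assume "s \<in> (\<lambda>s. p * s + c * Re (mtrace T)) ` feas d n \<Omega>"
    then obtain Y' where s: "s = p * Re (mtrace Y') + c * Re (mtrace T)" and Y': "psd_mat n Y'"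
      and L': "loewner_le (d*n) \<Omega> (kron (1\<^sub>m d) Y')"
      unfolding feas_def by auto
    have Y'c: "Y' \<in> carrier_mat n n" using Y' by (simp add: psd_iff)
    define Y where "Y = mat n n (\<lambda>(i,j). of_real p * Y'$$(i,j) + of_real c * T$$(i,j))"
    have Yc: "Y \<in> carrier_mat n n" by (simp add: Y_def)
    have Ypsd: "psd_mat n Y" using Y' T Yc p c by (intro psd_comb[OF Y' T Yc, of p c]) (auto simp: Y_def)
    have psdD: "psd_mat (d*n) (kron (1\<^sub>m d) Y' - \<Omega>)" using L' by (simp add: loewner_le_def)
    have L: "loewner_le (d*n) \<Omega>' (kron (1\<^sub>m d) Y)"
      unfolding loewner_le_def
    proof (intro conjI)
      show "psd_mat (d*n) (kron (1\<^sub>m d) Y - \<Omega>')"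
      proof (rule psd_comb[OF psdD psdD _ _ order_refl])
        show "kron (1\<^sub>m d) Y - \<Omega>' \<in> carrier_mat (d*n) (d*n)" using Om' Yc by auto
        show "0 \<le> p" using p by simp
        show "\<forall>i<d*n. \<forall>j<d*n. (kron (1\<^sub>m d) Y - \<Omega>') $$ (i,j) =
           of_real p * (kron (1\<^sub>m d) Y' - \<Omega>) $$ (i,j) + of_real 0 * (kron (1\<^sub>m d) Y' - \<Omega>) $$ (i,j)"
        proof (intro allI impI)
          fix i j assume ij: "i < d*n" "j < d*n"
          note mb = div_bound[OF ij(1)] div_bound[OF ij(2)]
          have e1: "kron (1\<^sub>m d) Y' $$ (i,j) = (if i div n = j div n then Y'$$(i mod n, j mod n) else 0)"
            using ij by (rule kron1_index[OF Y'c])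
          have e2: "kron (1\<^sub>m d) Y $$ (i,j) = (if i div n = j div n then Y$$(i mod n, j mod n) else 0)"
            using ij by (rule kron1_index[OF Yc])
          have e3: "kron (1\<^sub>m d) T $$ (i,j) = (if i div n = j div n then T$$(i mod n, j mod n) else 0)"
            using ij by (rule kron1_index[OF Tc])
          have e4: "Y$$(i mod n, j mod n) = of_real p * Y'$$(i mod n, j mod n) + of_real c * T$$(i mod n, j mod n)"
            using mb by (simp add: Y_def)
          have e5: "\<Omega>'$$(i,j) = of_real p * \<Omega>$$(i,j) + of_real c * kron (1\<^sub>m d) T $$ (i,j)"
            using ent ij by auto
          show "(kron (1\<^sub>m d) Y - \<Omega>') $$ (i,j) =
           of_real p * (kron (1\<^sub>m d) Y' - \<Omega>) $$ (i,j) + of_real 0 * (kron (1\<^sub>m d) Y' - \<Omega>) $$ (i,j)"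
            using ij Om Om' Yc Y'c p by (simp add: e1 e2 e3 e4 e5 field_simps)
        qed
      qed
    qed (use Om' Yc in auto)
    have "s = Re (mtrace Y)"
    proof -
      have t1: "mtrace Y = (\<Sum>i<n. Y$$(i,i))" by (rule mtrace_carrier[OF Yc])
      have t2: "(\<Sum>i<n. Y$$(i,i)) = (\<Sum>i<n. of_real p * Y'$$(i,i) + of_real c * T$$(i,i))"
        by (intro sum.cong refl) (simp add: Y_def)
      have "mtrace Y = of_real p * mtrace Y' + of_real c * mtrace T"
        unfolding t1 t2 mtrace_carrier[OF Y'c] mtrace_carrier[OF Tc]
        by (simp add: sum_distrib_left sum.distrib)
      then show ?thesis using s by simp
    qed
    then show "s \<in> feas d n \<Omega>'" unfolding feas_def using Ypsd L by auto
  qed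
qed

lemma Inf_affine:
  fixes S :: "real set"
  assumes "S \<noteq> {}" "bdd_below S" "p > 0"
  shows "Inf ((\<lambda>s. p * s + c) ` S) = p * Inf S + c"
proof (rule antisym)
  have bi: "bdd_below ((\<lambda>s. p * s + c) ` S)"
  proof -
    obtain m where "\<forall>s\<in>S. m \<le> s" using assms(2) by (auto simp: bdd_below_def)
    then have "\<forall>x\<in>(\<lambda>s. p * s + c) ` S. p*m + c \<le> x" using assms(3) by auto
    then show ?thesis by (meson bdd_belowI)
  qed
  show "p * Inf S + c \<le> Inf ((\<lambda>s. p * s + c) ` S)"
    using assms by (intro cInf_greatest) (auto intro!: mult_left_mono cInf_lower)
  have "(Inf ((\<lambda>s. p * s + c) ` S) - c) / p \<le> Inf S"
  proof (rule cInf_greatest[OF assms(1)])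
    fix s assume "s \<in> S"
    then have "Inf ((\<lambda>s. p * s + c) ` S) \<le> p * s + c" using bi by (intro cInf_lower) auto
    then show "(Inf ((\<lambda>s. p * s + c) ` S) - c) / p \<le> s" using assms(3) by (simp add: field_simps)
  qed
  then show "Inf ((\<lambda>s. p * s + c) ` S) \<le> p * Inf S + c" using assms(3) by (simp add: field_simps)
qed

lemma qf_one_mat: "qf n (1\<^sub>m n) v = of_real (\<Sum>k<n. (cmod (v$k))^2)"
proof -
  have "qf n (1\<^sub>m n) v = (\<Sum>i<n. \<Sum>j<n. (cnj (v$i) * v$j) * (if i = j then 1 else 0))"
    unfolding qf_def by (intro sum.cong refl) auto
  also have "\<dots> = (\<Sum>i<n. cnj (v$i) * v$i)"
  proof (intro sum.cong refl)
    fix i assume i: "i \<in> {..<n}"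
    have "(\<Sum>j<n. (cnj (v$i) * v$j) * (if i = j then 1 else 0)) = (\<Sum>j<n. if j = i then cnj (v$i) * v$j else 0)"
      by (intro sum.cong refl) auto
    then show "(\<Sum>j<n. (cnj (v$i) * v$j) * (if i = j then 1 else 0)) = cnj (v$i) * v$i" using i by simp
  qed
  also have "\<dots> = (\<Sum>i<n. of_real ((cmod (v$i))^2))"
  proof (intro sum.cong refl)
    fix i show "cnj (v$i) * v$i = of_real ((cmod (v$i))^2)" using complex_norm_square[of "v$i"] by (simp add: mult.commute)
  qed
  finally show ?thesis by simp
qed

lemma feas_nonempty:
  assumes Om: "\<Omega> \<in> carrier_mat (d*n) (d*n)" and H: "herm (d*n) \<Omega>"
  shows "feas d n \<Omega> \<noteq> {}"
proof -
  define K where "K = (\<Sum>i<d*n. \<Sum>j<d*n. cmod (\<Omega>$$(i,j)))"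
  have K0: "0 \<le> K" unfolding K_def by (simp add: sum_nonneg)
  define Y where "Y = mat n n (\<lambda>(i,j). (of_real K :: complex) * 1\<^sub>m n $$ (i,j))"
  have Yc: "Y \<in> carrier_mat n n" by (simp add: Y_def)
  have psd1: "psd_mat N (1\<^sub>m N)" for N
    unfolding psd_iff by (simp add: qf_one_mat sum_nonneg less_eq_complex_def)
  have Ypsd: "psd_mat n Y" using K0 by (intro psd_comb[OF psd1 psd1 Yc, of K 0]) (auto simp: Y_def)
  have L: "loewner_le (d*n) \<Omega> (kron (1\<^sub>m d) Y)"
    unfolding loewner_le_def psd_iff
  proof (intro conjI ballI)
    fix v :: "complex vec" assume v: "v \<in> carrier_vec (d*n)"
    have ent: "\<forall>i<d*n. \<forall>j<d*n. (kron (1\<^sub>m d) Y - \<Omega>) $$ (i,j) = of_real K * 1\<^sub>m (d*n) $$ (i,j) + (-1) * \<Omega> $$ (i,j)"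
    proof (intro allI impI)
      fix i j assume ij: "i < d*n" "j < d*n"
      note mb = div_bound[OF ij(1)] div_bound[OF ij(2)]
      have "(i div n = j div n \<and> i mod n = j mod n) \<longleftrightarrow> i = j"
        by (metis div_mult_mod_eq)
      moreover have "kron (1\<^sub>m d) Y $$ (i,j) = (if i div n = j div n then Y$$(i mod n, j mod n) else 0)"
        using ij by (rule kron1_index[OF Yc])
      moreover have "Y$$(i mod n, j mod n) = of_real K * (if i mod n = j mod n then 1 else 0)"
        using mb by (simp add: Y_def)
      ultimately show "(kron (1\<^sub>m d) Y - \<Omega>) $$ (i,j) = of_real K * 1\<^sub>m (d*n) $$ (i,j) + (-1) * \<Omega> $$ (i,j)"
        using ij mb Om Yc by auto
    qed
    have q: "qf (d*n) (kron (1\<^sub>m d) Y - \<Omega>) v = of_real K * qf (d*n) (1\<^sub>m (d*n)) v + (-1) * qf (d*n) \<Omega> v"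
      by (rule qf_lin[OF ent])
    have b: "cmod (qf (d*n) \<Omega> v) \<le> K * (\<Sum>k<d*n. (cmod (v$k))^2)"
      unfolding K_def by (rule qf_bound)
    have im: "Im (qf (d*n) \<Omega> v) = 0" by (rule qf_herm_real[OF H])
    have "Re (qf (d*n) \<Omega> v) \<le> K * (\<Sum>k<d*n. (cmod (v$k))^2)"
      using b complex_Re_le_cmod order_trans by blast
    then show "0 \<le> qf (d*n) (kron (1\<^sub>m d) Y - \<Omega>) v"
      unfolding q qf_one_mat using im by (simp add: less_eq_complex_def)
  qed (use Om Yc in auto)
  then show ?thesis unfolding feas_def using Ypsd by auto
qed

lemma feas_lower:
  assumes "s \<in> feas d n \<Omega>" "Re (mtrace (ptr d n \<Omega>)) = 1" "d > 0"
  shows "1 / real d \<le> s"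
proof -
  obtain Y where "s = Re (mtrace Y)" "psd_mat n Y" "loewner_le (d * n) \<Omega> (kron (1\<^sub>m d) Y)"
    using assms(1) unfolding feas_def by auto
  then have "1 \<le> real d * s" using trace_bound[of d n \<Omega> Y] assms(2) by (auto simp: psd_iff)
  then show ?thesis using assms(3) by (simp add: field_simps)
qed


lemma integrable_cont:
  fixes \<mu> :: "'g::{topological_group_add, t2_space} measure" and f :: "'g \<Rightarrow> complex"
  assumes K: "compact (UNIV :: 'g set)" and H: "haar_prob \<mu>" and f: "continuous_on UNIV f"
  shows "integrable \<mu> f"
proof -
  have sets: "sets \<mu> = sets borel" and P: "prob_space \<mu>" using H by (auto simp: haar_prob_def)
  interpret prob_space \<mu> by (rule P)
  have m: "f \<in> borel_measurable \<mu>"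
    using borel_measurable_continuous_onI[OF f] measurable_cong_sets[OF sets refl] by blast
  have "compact (f ` UNIV)" by (rule compact_continuous_image[OF f K])
  then have "bounded (f ` UNIV)" by (rule compact_imp_bounded)
  then obtain B where B: "\<And>x. norm (f x) \<le> B" by (auto simp: bounded_iff)
  show ?thesis by (rule integrable_const_bound[where B=B]) (use B m in auto)
qed

lemma unitary_carrier: "unitary_mat n U \<Longrightarrow> U \<in> carrier_mat n n"
  by (simp add: unitary_mat_def)

lemma cont_sandwich:
  fixes V :: "'g::topological_space \<Rightarrow> complex mat"
  assumes V: "\<And>g. V g \<in> carrier_mat m m" and c: "\<And>i j. i < m \<Longrightarrow> j < m \<Longrightarrow> continuous_on UNIV (\<lambda>g. V g $$ (i,j))"
    and A: "A \<in> carrier_mat m m" and ij: "i < m" "j < m"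
  shows "continuous_on UNIV (\<lambda>g. (V g * A * mat_adjoint (V g)) $$ (i,j))"
proof -
  have eq: "(\<lambda>g. (V g * A * mat_adjoint (V g)) $$ (i,j)) = (\<lambda>g. \<Sum>k<m. \<Sum>l<m. V g $$ (i,k) * A $$ (k,l) * cnj (V g $$ (j,l)))"
    using sandwich[OF V A ij] by auto
  have cont: "continuous_on UNIV (\<lambda>g. \<Sum>k<m. \<Sum>l<m. V g $$ (i,k) * A $$ (k,l) * cnj (V g $$ (j,l)))"
    using c ij by (intro continuous_intros) auto
  show ?thesis by (subst eq) (rule cont)
qed

lemma cont_conj:
  fixes U :: "'g::topological_space \<Rightarrow> complex mat"
  assumes "\<And>i j. i < m \<Longrightarrow> j < m \<Longrightarrow> continuous_on UNIV (\<lambda>g. U g $$ (i,j))"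
    and "\<And>g. U g \<in> carrier_mat m m" "i < m" "j < m"
  shows "continuous_on UNIV (\<lambda>g. conj_mat (U g) $$ (i,j))"
proof -
  have eq: "(\<lambda>g. conj_mat (U g) $$ (i,j)) = (\<lambda>g. cnj (U g $$ (i,j)))"
    by (rule ext) (metis assms(2-4) carrier_matD(1,2) conj_mat_index(1))
  show ?thesis by (subst eq) (use assms in \<open>auto intro!: continuous_intros\<close>)
qed

definition Rm :: "('g \<Rightarrow> complex mat) \<Rightarrow> complex mat \<Rightarrow> 'g \<Rightarrow> complex mat" where
  "Rm U A g = conj_mat (U g) * A * mat_adjoint (conj_mat (U g))"

definition Sm :: "('g \<Rightarrow> complex mat) \<Rightarrow> complex mat \<Rightarrow> 'g \<Rightarrow> complex mat" where
  "Sm U A g = U g * A * mat_adjoint (U g)"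

lemma twirl_entry:
  assumes UB: "cont_unitary_rep d UB" and UX: "cont_unitary_rep n UX"
    and A: "A \<in> carrier_mat d d" and T: "T \<in> carrier_mat n n" and ij: "i < d*n" "j < d*n"
  shows "twirl \<mu> (\<lambda>g. conj_mat (UB g)) UX d n (kron A T) $$ (i,j)
     = (\<integral>g. Rm UB A g $$ (i div n, j div n) * Sm UX T g $$ (i mod n, j mod n) \<partial>\<mu>)"
proof -
  have Vc: "conj_mat (UB g) \<in> carrier_mat d d" for g
    using UB by (simp add: cont_unitary_rep_def unitary_carrier)
  have Uc: "UX g \<in> carrier_mat n n" for g
    using UX by (simp add: cont_unitary_rep_def unitary_carrier)
  have "(kron (conj_mat (UB g)) (UX g) * kron A T * mat_adjoint (kron (conj_mat (UB g)) (UX g))) $$ (i,j)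
      = Rm UB A g $$ (i div n, j div n) * Sm UX T g $$ (i mod n, j mod n)" for g
    unfolding KI[OF Vc Uc A T] Rm_def Sm_def
    using ij Vc[of g] Uc[of g] A T by (subst kron_index[of _ d d _ n n]) (auto intro!: mult_carrier_mat)
  then show ?thesis unfolding twirl_def using ij by simp
qed

lemma cont_Rm:
  assumes UB: "cont_unitary_rep d UB" and A: "A \<in> carrier_mat d d" and ij: "i < d" "j < d"
  shows "continuous_on UNIV (\<lambda>g. Rm UB A g $$ (i,j))"
  unfolding Rm_def
proof (rule cont_sandwich[OF _ _ A ij])
  show "conj_mat (UB g) \<in> carrier_mat d d" for g using UB by (simp add: cont_unitary_rep_def unitary_carrier)
  show "continuous_on UNIV (\<lambda>g. conj_mat (UB g) $$ (i, j))" if "i < d" "j < d" for i j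
    using UB that by (intro cont_conj[of d]) (auto simp: cont_unitary_rep_def unitary_carrier)
qed

lemma cont_Sm:
  assumes UX: "cont_unitary_rep n UX" and A: "A \<in> carrier_mat n n" and ij: "i < n" "j < n"
  shows "continuous_on UNIV (\<lambda>g. Sm UX A g $$ (i,j))"
  unfolding Sm_def
proof (rule cont_sandwich[OF _ _ A ij])
  show "UX g \<in> carrier_mat n n" for g using UX by (simp add: cont_unitary_rep_def unitary_carrier)
  show "continuous_on UNIV (\<lambda>g. UX g $$ (i, j))" if "i < n" "j < n" for i j
    using UX that by (auto simp: cont_unitary_rep_def)
qed


lemma sum_delta_r: fixes f :: "nat \<Rightarrow> complex" assumes "k < m"
  shows "(\<Sum>l<m. f l * (if k = l then 1 else 0)) = f k"
proof -
  have "(\<Sum>l<m. f l * (if k = l then 1 else 0)) = (\<Sum>l<m. if l = k then f l else 0)"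
    by (intro sum.cong refl) auto
  then show ?thesis using assms by simp
qed

lemma trace_cyclic:
  assumes V: "unitary_mat m V" and A: "A \<in> carrier_mat m m"
  shows "(\<Sum>r<m. (V*A*mat_adjoint V)$$(r,r)) = (\<Sum>r<m. A$$(r,r))"
proof -
  have Vc: "V \<in> carrier_mat m m" using V by (rule unitary_carrier)
  have "(\<Sum>r<m. (V*A*mat_adjoint V)$$(r,r)) = (\<Sum>r<m. \<Sum>k<m. \<Sum>l<m. V$$(r,k) * A$$(k,l) * cnj (V$$(r,l)))"
    using sandwich[OF Vc A] by simp
  also have "\<dots> = (\<Sum>k<m. \<Sum>r<m. \<Sum>l<m. V$$(r,k) * A$$(k,l) * cnj (V$$(r,l)))"
    by (rule sum.swap)
  also have "\<dots> = (\<Sum>k<m. \<Sum>l<m. \<Sum>r<m. V$$(r,k) * A$$(k,l) * cnj (V$$(r,l)))"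
    by (rule sum.cong[OF refl]) (rule sum.swap)
  also have "\<dots> = (\<Sum>k<m. \<Sum>l<m. A$$(k,l) * (\<Sum>r<m. cnj (V$$(r,l)) * V$$(r,k)))"
    by (simp add: sum_distrib_left algebra_simps)
  also have "\<dots> = (\<Sum>k<m. \<Sum>l<m. A$$(k,l) * (if l = k then 1 else 0))"
    using unitary_entries(2)[OF V] by (intro sum.cong refl) simp
  also have "\<dots> = (\<Sum>k<m. A$$(k,k))"
  proof (intro sum.cong refl)
    fix k assume "k \<in> {..<m}"
    then show "(\<Sum>l<m. A$$(k,l) * (if l = k then 1 else 0)) = A$$(k,k)"
      using sum_delta_r[of k m "\<lambda>l. A$$(k,l)"] by (simp add: eq_commute[of _ k])
  qed
  finally show ?thesis .
qed

lemma herm_sandwich: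
  assumes Vc: "V \<in> carrier_mat m m" and A: "A \<in> carrier_mat m m" and H: "herm m A"
  shows "herm m (V*A*mat_adjoint V)"
  unfolding herm_def
proof (intro allI impI)
  fix i j assume ij: "i < m" "j < m"
  have "cnj ((V*A*mat_adjoint V)$$(j,i)) = (\<Sum>k<m. \<Sum>l<m. cnj (V$$(j,k)) * cnj (A$$(k,l)) * V$$(i,l))"
    using sandwich[OF Vc A ij(2) ij(1)] by simp
  also have "\<dots> = (\<Sum>k<m. \<Sum>l<m. V$$(i,l) * A$$(l,k) * cnj (V$$(j,k)))"
  proof (intro sum.cong refl)
    fix k l assume "k \<in> {..<m}" "l \<in> {..<m}"
    then have "cnj (A$$(k,l)) = A$$(l,k)" using H unfolding herm_def by (metis complex_cnj_cnj lessThan_iff)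
    then show "cnj (V$$(j,k)) * cnj (A$$(k,l)) * V$$(i,l) = V$$(i,l) * A$$(l,k) * cnj (V$$(j,k))" by simp
  qed
  also have "\<dots> = (\<Sum>l<m. \<Sum>k<m. V$$(i,l) * A$$(l,k) * cnj (V$$(j,k)))" by (rule sum.swap)
  also have "\<dots> = (V*A*mat_adjoint V)$$(i,j)" using sandwich[OF Vc A ij] by simp
  finally show "(V*A*mat_adjoint V)$$(i,j) = cnj ((V*A*mat_adjoint V)$$(j,i))" by (metis complex_cnj_cnj)
qed

lemma sandwich_comb:
  assumes V: "unitary_mat m V" and A: "A \<in> carrier_mat m m" and ab: "a < m" "b < m"
  shows "(V * mat m m (\<lambda>(k,l). x * A$$(k,l) + y * (if k = l then 1 else 0)) * mat_adjoint V)$$(a,b)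
       = x * (V*A*mat_adjoint V)$$(a,b) + y * (if a = b then 1 else 0)"
proof -
  have Vc: "V \<in> carrier_mat m m" using V by (rule unitary_carrier)
  let ?B = "mat m m (\<lambda>(k,l). x * A$$(k,l) + y * (if k = l then 1 else 0))"
  have Bc: "?B \<in> carrier_mat m m" by simp
  have "(V * ?B * mat_adjoint V)$$(a,b) = (\<Sum>k<m. \<Sum>l<m. V$$(a,k) * ?B$$(k,l) * cnj (V$$(b,l)))"
    by (rule sandwich[OF Vc Bc ab])
  also have "\<dots> = (\<Sum>k<m. \<Sum>l<m. x * (V$$(a,k) * A$$(k,l) * cnj (V$$(b,l))) + y * ((V$$(a,k) * cnj (V$$(b,l))) * (if k = l then 1 else 0)))"
    by (intro sum.cong refl) (auto simp: algebra_simps)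
  also have "\<dots> = x * (\<Sum>k<m. \<Sum>l<m. V$$(a,k) * A$$(k,l) * cnj (V$$(b,l))) + y * (\<Sum>k<m. \<Sum>l<m. (V$$(a,k) * cnj (V$$(b,l))) * (if k = l then 1 else 0))"
    by (simp add: sum.distrib sum_distrib_left)
  also have "(\<Sum>k<m. \<Sum>l<m. (V$$(a,k) * cnj (V$$(b,l))) * (if k = l then 1 else 0)) = (\<Sum>k<m. V$$(a,k) * cnj (V$$(b,k)))"
    by (intro sum.cong refl) (simp add: sum_delta_r[where f="\<lambda>l. V$$(a,_) * cnj (V$$(b,l))"])
  also have "\<dots> = (if a = b then 1 else 0)" by (rule unitary_entries(1)[OF V ab])
  finally show ?thesis using sandwich[OF Vc A ab] by simp
qed

lemma qf_sandwich:
  assumes Vc: "V \<in> carrier_mat m m" and A: "A \<in> carrier_mat m m" and v: "v \<in> carrier_vec m"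
  shows "qf m (V*A*mat_adjoint V) v = qf m A (mat_adjoint V *\<^sub>v v)"
proof -
  have w: "(mat_adjoint V *\<^sub>v v) $ k = (\<Sum>i<m. cnj (V$$(i,k)) * v$i)" if "k < m" for k
    using that Vc v by (simp add: scalar_prod_def atLeast0LessThan)
  have "qf m (V*A*mat_adjoint V) v = (\<Sum>i<m. \<Sum>j<m. cnj (v$i) * (\<Sum>k<m. \<Sum>l<m. V$$(i,k) * A$$(k,l) * cnj (V$$(j,l))) * v$j)"
    unfolding qf_def using sandwich[OF Vc A] by (intro sum.cong refl) simp
  also have "\<dots> = (\<Sum>i<m. \<Sum>j<m. \<Sum>k<m. \<Sum>l<m. (V$$(i,k) * cnj (v$i)) * A$$(k,l) * (cnj (V$$(j,l)) * v$j))"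
    by (simp add: sum_distrib_left sum_distrib_right algebra_simps)
  also have "\<dots> = (\<Sum>i<m. \<Sum>k<m. \<Sum>j<m. \<Sum>l<m. (V$$(i,k) * cnj (v$i)) * A$$(k,l) * (cnj (V$$(j,l)) * v$j))"
    by (rule sum.cong[OF refl]) (rule sum.swap)
  also have "\<dots> = (\<Sum>k<m. \<Sum>i<m. \<Sum>j<m. \<Sum>l<m. (V$$(i,k) * cnj (v$i)) * A$$(k,l) * (cnj (V$$(j,l)) * v$j))"
    by (rule sum.swap)
  also have "\<dots> = (\<Sum>k<m. \<Sum>i<m. \<Sum>l<m. \<Sum>j<m. (V$$(i,k) * cnj (v$i)) * A$$(k,l) * (cnj (V$$(j,l)) * v$j))"
    by (rule sum.cong[OF refl], rule sum.cong[OF refl]) (rule sum.swap)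
  also have "\<dots> = (\<Sum>k<m. \<Sum>l<m. \<Sum>i<m. \<Sum>j<m. (V$$(i,k) * cnj (v$i)) * A$$(k,l) * (cnj (V$$(j,l)) * v$j))"
    by (rule sum.cong[OF refl]) (rule sum.swap)
  also have "\<dots> = (\<Sum>k<m. \<Sum>l<m. cnj (\<Sum>i<m. cnj (V$$(i,k)) * v$i) * A$$(k,l) * (\<Sum>j<m. cnj (V$$(j,l)) * v$j))"
    by (simp add: sum_distrib_left sum_distrib_right algebra_simps)
  also have "\<dots> = qf m A (mat_adjoint V *\<^sub>v v)"
    unfolding qf_def using w by simp
  finally show ?thesis .
qed


definition tbar :: "'g measure \<Rightarrow> ('g \<Rightarrow> complex mat) \<Rightarrow> nat \<Rightarrow> complex mat \<Rightarrow> complex mat" where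
  "tbar \<mu> UX n T = mat n n (\<lambda>(k,l). \<integral>g. Sm UX T g $$ (k,l) \<partial>\<mu>)"

locale setting =
  fixes \<mu> :: "'g::{topological_group_add, t2_space} measure"
    and UB UX :: "'g \<Rightarrow> complex mat" and d n :: nat
  assumes K: "compact (UNIV :: 'g set)" and HP: "haar_prob \<mu>"
    and UB: "cont_unitary_rep d UB" and UX: "cont_unitary_rep n UX"
begin

abbreviation Om where "Om A T \<equiv> twirl \<mu> (\<lambda>g. conj_mat (UB g)) UX d n (kron A T)"

lemma Om_carrier: "Om A T \<in> carrier_mat (d*n) (d*n)"
  by (simp add: twirl_def)

lemma Vu: "unitary_mat d (conj_mat (UB g))"
  using UB unitary_conj by (auto simp: cont_unitary_rep_def)

lemma Vc: "conj_mat (UB g) \<in> carrier_mat d d"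
  using Vu by (rule unitary_carrier)

lemma Uu: "unitary_mat n (UX g)"
  using UX by (auto simp: cont_unitary_rep_def)

lemma Uc: "UX g \<in> carrier_mat n n"
  using Uu by (rule unitary_carrier)

lemma int_RS:
  assumes A: "A \<in> carrier_mat d d" and T: "T \<in> carrier_mat n n"
    and ab: "a < d" "b < d" and kl: "k < n" "l < n"
  shows "integrable \<mu> (\<lambda>g. Rm UB A g $$ (a,b) * Sm UX T g $$ (k,l))"
  using cont_Rm[OF UB A ab] cont_Sm[OF UX T kl]
  by (intro integrable_cont[OF K HP] continuous_intros)

lemma int_S:
  assumes T: "T \<in> carrier_mat n n" and kl: "k < n" "l < n"
  shows "integrable \<mu> (\<lambda>g. Sm UX T g $$ (k,l))"
  using cont_Sm[OF UX T kl] by (intro integrable_cont[OF K HP])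

lemma depol_eq: "depol d p \<eta> = mat d d (\<lambda>(k,l). complex_of_real p * \<eta>$$(k,l) + complex_of_real ((1-p)/real d) * (if k = l then 1 else 0))"
  if "\<eta> \<in> carrier_mat d d"
  using that by (auto intro!: eq_matI simp: depol_def)

lemma Om_depol:
  assumes \<eta>: "\<eta> \<in> carrier_mat d d" and T: "T \<in> carrier_mat n n"
  shows "\<forall>i<d*n. \<forall>j<d*n. Om (depol d p \<eta>) T $$ (i,j) = of_real p * Om \<eta> T $$ (i,j)
      + of_real ((1-p)/real d) * kron (1\<^sub>m d) (tbar \<mu> UX n T) $$ (i,j)"
proof (intro allI impI)
  fix i j assume ij: "i < d*n" "j < d*n"
  note mb = div_bound[OF ij(1)] div_bound[OF ij(2)]
  let ?c = "complex_of_real ((1-p)/real d)" and ?p = "complex_of_real p"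
  let ?R = "\<lambda>g. Rm UB \<eta> g $$ (i div n, j div n)" and ?S = "\<lambda>g. Sm UX T g $$ (i mod n, j mod n)"
  let ?\<delta> = "(if i div n = j div n then 1 else 0) :: complex"
  have Dc: "depol d p \<eta> \<in> carrier_mat d d" using \<eta> by (simp add: depol_def)
  have R: "Rm UB (depol d p \<eta>) g $$ (i div n, j div n) = ?p * ?R g + ?c * ?\<delta>" for g
    unfolding Rm_def depol_eq[OF \<eta>] by (rule sandwich_comb[OF Vu \<eta> mb(1) mb(3)])
  have "Om (depol d p \<eta>) T $$ (i,j) = (\<integral>g. Rm UB (depol d p \<eta>) g $$ (i div n, j div n) * ?S g \<partial>\<mu>)"
    by (rule twirl_entry[OF UB UX Dc T ij])
  also have "\<dots> = (\<integral>g. ?p * (?R g * ?S g) + (?c * ?\<delta>) * ?S g \<partial>\<mu>)"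
    unfolding R by (simp add: algebra_simps)
  also have "\<dots> = ?p * (\<integral>g. ?R g * ?S g \<partial>\<mu>) + (?c * ?\<delta>) * (\<integral>g. ?S g \<partial>\<mu>)"
    using int_RS[OF \<eta> T mb(1) mb(3) mb(2) mb(4)] int_S[OF T mb(2) mb(4)] by simp
  also have "\<dots> = ?p * Om \<eta> T $$ (i,j) + ?c * kron (1\<^sub>m d) (tbar \<mu> UX n T) $$ (i,j)"
    using twirl_entry[OF UB UX \<eta> T ij] kron1_index[of "tbar \<mu> UX n T" n i d j] ij mb
    by (simp add: tbar_def)
  finally show "Om (depol d p \<eta>) T $$ (i,j) = ?p * Om \<eta> T $$ (i,j) + ?c * kron (1\<^sub>m d) (tbar \<mu> UX n T) $$ (i,j)" .
qed

lemma Om_herm: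
  assumes \<eta>: "\<eta> \<in> carrier_mat d d" and T: "T \<in> carrier_mat n n" and h1: "herm d \<eta>" and h2: "herm n T"
  shows "herm (d*n) (Om \<eta> T)"
  unfolding herm_def
proof (intro allI impI)
  fix i j assume ij: "i < d*n" "j < d*n"
  note mb = div_bound[OF ij(1)] div_bound[OF ij(2)]
  have hR: "herm d (Rm UB \<eta> g)" for g unfolding Rm_def by (rule herm_sandwich[OF Vc \<eta> h1])
  have hS: "herm n (Sm UX T g)" for g unfolding Sm_def by (rule herm_sandwich[OF Uc T h2])
  have "cnj (Om \<eta> T $$ (j,i)) = cnj (\<integral>g. Rm UB \<eta> g $$ (j div n, i div n) * Sm UX T g $$ (j mod n, i mod n) \<partial>\<mu>)"
    using twirl_entry[OF UB UX \<eta> T ij(2) ij(1)] by simp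
  also have "\<dots> = (\<integral>g. cnj (Rm UB \<eta> g $$ (j div n, i div n) * Sm UX T g $$ (j mod n, i mod n)) \<partial>\<mu>)"
    by (rule Bochner_Integration.integral_cnj[symmetric])
  also have "\<dots> = (\<integral>g. Rm UB \<eta> g $$ (i div n, j div n) * Sm UX T g $$ (i mod n, j mod n) \<partial>\<mu>)"
  proof (rule Bochner_Integration.integral_cong[OF refl])
    fix g
    have "Rm UB \<eta> g $$ (i div n, j div n) = cnj (Rm UB \<eta> g $$ (j div n, i div n))"
      using hR[of g] mb unfolding herm_def by blast
    moreover have "Sm UX T g $$ (i mod n, j mod n) = cnj (Sm UX T g $$ (j mod n, i mod n))"
      using hS[of g] mb unfolding herm_def by blast
    ultimately show "cnj (Rm UB \<eta> g $$ (j div n, i div n) * Sm UX T g $$ (j mod n, i mod n)) =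
       Rm UB \<eta> g $$ (i div n, j div n) * Sm UX T g $$ (i mod n, j mod n)" by simp
  qed
  also have "\<dots> = Om \<eta> T $$ (i,j)" using twirl_entry[OF UB UX \<eta> T ij] by simp
  finally show "Om \<eta> T $$ (i,j) = cnj (Om \<eta> T $$ (j,i))" by (metis complex_cnj_cnj)
qed

lemma Om_ptr:
  assumes \<eta>: "\<eta> \<in> carrier_mat d d" and T: "T \<in> carrier_mat n n" and tr: "mtrace \<eta> = 1"
  shows "ptr d n (Om \<eta> T) = tbar \<mu> UX n T"
proof (rule eq_matI)
  fix k l assume "k < dim_row (tbar \<mu> UX n T)" "l < dim_col (tbar \<mu> UX n T)"
  then have kl: "k < n" "l < n" by (auto simp: tbar_def)
  have tr1: "(\<Sum>r<d. Rm UB \<eta> g $$ (r,r)) = 1" for g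
    using trace_cyclic[OF Vu \<eta>] tr mtrace_carrier[OF \<eta>] unfolding Rm_def by simp
  have "ptr d n (Om \<eta> T) $$ (k,l) = (\<Sum>r<d. Om \<eta> T $$ (r*n+k, r*n+l))"
    using kl by (simp add: ptr_def)
  also have "\<dots> = (\<Sum>r<d. \<integral>g. Rm UB \<eta> g $$ (r, r) * Sm UX T g $$ (k, l) \<partial>\<mu>)"
  proof (rule sum.cong[OF refl])
    fix r assume r: "r \<in> {..<d}"
    then have b: "r*n+k < d*n" "r*n+l < d*n" using idx_bound kl by auto
    show "Om \<eta> T $$ (r*n+k, r*n+l) = (\<integral>g. Rm UB \<eta> g $$ (r, r) * Sm UX T g $$ (k, l) \<partial>\<mu>)"
      using twirl_entry[OF UB UX \<eta> T b] kl by simp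
  qed
  also have "\<dots> = (\<integral>g. (\<Sum>r<d. Rm UB \<eta> g $$ (r, r) * Sm UX T g $$ (k, l)) \<partial>\<mu>)"
    by (rule Bochner_Integration.integral_sum[symmetric]) (use int_RS[OF \<eta> T _ _ kl] in auto)
  also have "\<dots> = (\<integral>g. Sm UX T g $$ (k, l) \<partial>\<mu>)"
    by (simp add: sum_distrib_right[symmetric] tr1)
  also have "\<dots> = tbar \<mu> UX n T $$ (k,l)" using kl by (simp add: tbar_def)
  finally show "ptr d n (Om \<eta> T) $$ (k,l) = tbar \<mu> UX n T $$ (k,l)" .
qed (auto simp: ptr_def tbar_def)

lemma tbar_trace:
  assumes T: "T \<in> carrier_mat n n" and tr: "mtrace T = 1"
  shows "mtrace (tbar \<mu> UX n T) = 1"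
proof -
  interpret prob_space \<mu> using HP by (simp add: haar_prob_def)
  have tr1: "(\<Sum>k<n. Sm UX T g $$ (k,k)) = 1" for g
    using trace_cyclic[OF Uu T] tr mtrace_carrier[OF T] unfolding Sm_def by simp
  have "mtrace (tbar \<mu> UX n T) = (\<Sum>k<n. \<integral>g. Sm UX T g $$ (k,k) \<partial>\<mu>)"
    by (simp add: mtrace_def tbar_def)
  also have "\<dots> = (\<integral>g. (\<Sum>k<n. Sm UX T g $$ (k,k)) \<partial>\<mu>)"
    by (rule Bochner_Integration.integral_sum[symmetric]) (use int_S[OF T] in auto)
  also have "\<dots> = 1" by (simp add: tr1 prob_space)
  finally show ?thesis .
qed

lemma tbar_psd:
  assumes T: "psd_mat n T"
  shows "psd_mat n (tbar \<mu> UX n T)"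
  unfolding psd_iff
proof (intro conjI ballI)
  show "tbar \<mu> UX n T \<in> carrier_mat n n" by (simp add: tbar_def)
  fix v :: "complex vec" assume v: "v \<in> carrier_vec n"
  have Tc: "T \<in> carrier_mat n n" using T by (simp add: psd_iff)
  have pos: "0 \<le> qf n (Sm UX T g) v" for g
  proof -
    have "qf n (Sm UX T g) v = qf n T (mat_adjoint (UX g) *\<^sub>v v)"
      unfolding Sm_def by (rule qf_sandwich[OF Uc Tc v])
    moreover have "mat_adjoint (UX g) *\<^sub>v v \<in> carrier_vec n" using Uc[of g] v by (intro mult_mat_vec_carrier) auto
    ultimately show ?thesis using T by (simp add: psd_iff)
  qed
  have intf: "integrable \<mu> (\<lambda>g. cnj (v$i) * Sm UX T g $$ (i,j) * v$j)" if "i < n" "j < n" for i j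
    using int_S[OF Tc that] by simp
  have "qf n (tbar \<mu> UX n T) v = (\<Sum>i<n. \<Sum>j<n. \<integral>g. cnj (v$i) * Sm UX T g $$ (i,j) * v$j \<partial>\<mu>)"
    unfolding qf_def tbar_def by (intro sum.cong refl) simp
  also have "\<dots> = (\<Sum>i<n. \<integral>g. (\<Sum>j<n. cnj (v$i) * Sm UX T g $$ (i,j) * v$j) \<partial>\<mu>)"
    by (intro sum.cong refl Bochner_Integration.integral_sum[symmetric]) (use intf in auto)
  also have "\<dots> = (\<integral>g. (\<Sum>i<n. \<Sum>j<n. cnj (v$i) * Sm UX T g $$ (i,j) * v$j) \<partial>\<mu>)"
    by (intro Bochner_Integration.integral_sum[symmetric] integrable_sum) (use intf in auto)
  also have "\<dots> = (\<integral>g. qf n (Sm UX T g) v \<partial>\<mu>)" by (simp add: qf_def)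
  finally have eq: "qf n (tbar \<mu> UX n T) v = (\<integral>g. qf n (Sm UX T g) v \<partial>\<mu>)" .
  have int: "integrable \<mu> (\<lambda>g. qf n (Sm UX T g) v)"
    unfolding qf_def by (intro Bochner_Integration.integrable_sum) (use intf in auto)
  have "Re (\<integral>g. qf n (Sm UX T g) v \<partial>\<mu>) = (\<integral>g. Re (qf n (Sm UX T g) v) \<partial>\<mu>)"
    using int by simp
  moreover have "(\<integral>g. Re (qf n (Sm UX T g) v) \<partial>\<mu>) \<ge> 0"
    using pos by (intro Bochner_Integration.integral_nonneg) (auto simp: less_eq_complex_def)
  moreover have "Im (\<integral>g. qf n (Sm UX T g) v \<partial>\<mu>) = (\<integral>g. Im (qf n (Sm UX T g) v) \<partial>\<mu>)"
    using int by simp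
  moreover have "(\<integral>g. Im (qf n (Sm UX T g) v) \<partial>\<mu>) = 0"
    using pos by (simp add: less_eq_complex_def)
  ultimately show "0 \<le> qf n (tbar \<mu> UX n T) v" unfolding eq by (simp add: less_eq_complex_def)
qed

end


lemma state_dim_pos: assumes "is_state n \<rho>" shows "n > 0"
proof (rule ccontr)
  assume "\<not> n > 0" then have "n = 0" by simp
  moreover have "\<rho> \<in> carrier_mat n n" using assms by (simp add: is_state_def psd_iff)
  ultimately have "mtrace \<rho> = 0" by (simp add: mtrace_carrier)
  then show False using assms by (simp add: is_state_def)
qed

context setting begin

lemma a_props:
  assumes \<eta>: "is_state d \<eta>" and T: "is_state n T" and p: "0 < p" "p \<le> 1"
  shows "1 / real d \<le> Inf (feas d n (Om \<eta> T))"
    and "Inf (feas d n (Om (depol d p \<eta>) T)) = p * Inf (feas d n (Om \<eta> T)) + (1-p)/real d"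
proof -
  have d: "d > 0" using state_dim_pos[OF \<eta>] .
  have ep: "psd_mat d \<eta>" and et: "mtrace \<eta> = 1" using \<eta> by (auto simp: is_state_def)
  have Tp: "psd_mat n T" and Tt: "mtrace T = 1" using T by (auto simp: is_state_def)
  have ec: "\<eta> \<in> carrier_mat d d" using ep by (simp add: psd_iff)
  have Tc: "T \<in> carrier_mat n n" using Tp by (simp add: psd_iff)
  have P: "ptr d n (Om \<eta> T) = tbar \<mu> UX n T" by (rule Om_ptr[OF ec Tc et])
  have tbp: "psd_mat n (tbar \<mu> UX n T)" by (rule tbar_psd[OF Tp])
  have tbt: "mtrace (tbar \<mu> UX n T) = 1" by (rule tbar_trace[OF Tc Tt])
  let ?S = "feas d n (Om \<eta> T)"
  have ne: "?S \<noteq> {}"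
    by (rule feas_nonempty[OF Om_carrier Om_herm[OF ec Tc psd_herm[OF ep] psd_herm[OF Tp]]])
  have low: "\<And>s. s \<in> ?S \<Longrightarrow> 1 / real d \<le> s"
    using feas_lower[OF _ _ d] P tbt by simp
  have bdd: "bdd_below ?S" using low by (meson bdd_belowI)
  show "1 / real d \<le> Inf ?S" using ne low by (intro cInf_greatest) auto
  have c: "0 \<le> (1-p)/real d" using p by simp
  have "feas d n (Om (depol d p \<eta>) T) = (\<lambda>s. p * s + (1-p)/real d * Re (mtrace (tbar \<mu> UX n T))) ` ?S"
    by (rule feas_affine[OF Om_carrier Om_carrier d p(1) c tbp P Om_depol[OF ec Tc]])
  then have "feas d n (Om (depol d p \<eta>) T) = (\<lambda>s. p * s + (1-p)/real d) ` ?S"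
    using tbt by simp
  then show "Inf (feas d n (Om (depol d p \<eta>) T)) = p * Inf ?S + (1-p)/real d"
    using Inf_affine[OF ne bdd p(1)] by simp
qed

end

theorem lemma11:
  fixes \<mu> :: "'g::{topological_group_add, t2_space} measure"
    and UA UB :: "'g \<Rightarrow> complex mat"
    and dA dB :: nat
    and \<rho> \<sigma> \<eta> :: "complex mat"
    and p :: real
  assumes "compact (UNIV :: 'g set)"
    and "haar_prob \<mu>"
    and "cont_unitary_rep dA UA"
    and "cont_unitary_rep dB UB"
    and "is_state dA \<rho>"
    and "is_state dB \<sigma>"
    and "is_state dB \<eta>"
    and "0 < p" and "p \<le> 1"
  shows "Delta_H \<mu> UA dA UB dB \<rho> \<sigma> \<eta> \<ge> 0 \<longleftrightarrow>
         Delta_H \<mu> UA dA UB dB \<rho> \<sigma> (depol dB p \<eta>) \<ge> 0"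
proof -
  interpret SB: setting \<mu> UB UB dB dB using assms by unfold_locales auto
  interpret SA: setting \<mu> UB UA dB dA using assms by unfold_locales auto
  define a\<sigma> where "a\<sigma> = Inf (feas dB dB (SB.Om \<eta> \<sigma>))"
  define a\<rho> where "a\<rho> = Inf (feas dB dA (SA.Om \<eta> \<rho>))"
  have d: "dB > 0" using state_dim_pos[OF assms(7)] .
  have 1: "1 / real dB \<le> a\<sigma>" "Inf (feas dB dB (SB.Om (depol dB p \<eta>) \<sigma>)) = p * a\<sigma> + (1-p)/real dB"
    using SB.a_props[OF assms(7,6,8,9)] unfolding a\<sigma>_def by auto
  have 2: "1 / real dB \<le> a\<rho>" "Inf (feas dB dA (SA.Om (depol dB p \<eta>) \<rho>)) = p * a\<rho> + (1-p)/real dB"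
    using SA.a_props[OF assms(7,5,8,9)] unfolding a\<rho>_def by auto
  have pos: "0 < a\<sigma>" "0 < a\<rho>" using 1(1) 2(1) d
    by (meson of_nat_0_less_iff order_less_le_trans zero_less_divide_1_iff)+
  have c: "0 \<le> (1-p)/real dB" using assms(9) by simp
  have pos': "0 < p * a\<sigma> + (1-p)/real dB" "0 < p * a\<rho> + (1-p)/real dB"
    using pos assms(8) c by (simp_all add: add_pos_nonneg)
  have e1: "Delta_H \<mu> UA dA UB dB \<rho> \<sigma> \<eta> = log 2 a\<rho> - log 2 a\<sigma>"
    unfolding Delta_H_def H_eta_def Hmin_feas a\<sigma>_def a\<rho>_def by simp
  have e2: "Delta_H \<mu> UA dA UB dB \<rho> \<sigma> (depol dB p \<eta>) = log 2 (p * a\<rho> + (1-p)/real dB) - log 2 (p * a\<sigma> + (1-p)/real dB)"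
    unfolding Delta_H_def H_eta_def Hmin_feas using 1(2) 2(2) by simp
  have "Delta_H \<mu> UA dA UB dB \<rho> \<sigma> \<eta> \<ge> 0 \<longleftrightarrow> a\<sigma> \<le> a\<rho>"
    unfolding e1 using pos by simp
  also have "\<dots> \<longleftrightarrow> p * a\<sigma> + (1-p)/real dB \<le> p * a\<rho> + (1-p)/real dB"
    using assms(8) by simp
  also have "\<dots> \<longleftrightarrow> Delta_H \<mu> UA dA UB dB \<rho> \<sigma> (depol dB p \<eta>) \<ge> 0"
    unfolding e2 using pos' by simp
  finally show ?thesis .
qed


end
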